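(* Let $G$ be a group given by a presentation $\langle X\mid R\rangle$ in which every $x\in X$ satisfies $x^2=e$ and every relation in $R$ has even length. If $I=X$ or $I=\{x\}$ for some $x\in X$, then for every $w\in G$ the set $wG_I\cap G^I$ contains exactly one element. Consequently, the factorisation of each element of $G$ with respect to $G_I$ is unique: if $w=ab=a'b'$ with $a,a'\in G^I$ and $b,b'\in G_I$, then $a=a'$ and $b=b'$.
   Context: Every $w\in G$ can be written as a product $x_1^{a_1}\cdots x_r^{a_r}$ with $x_j\in X$, $a_j=\pm1$; the length $l(w)$ is the smallest such $r$. The length of a relation $u=v$ ($u,v$ in the free group $F(X)$) is the length of the word $uv^{-1}$ in $F(X)$. For $I\subseteq X$, $G_I$ is the subgroup of $G$ generated by $I$, and $G^I=\{w\in G: l(wy)>l(w)\ \text{for all } y\in I\}$. *)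

theory Defs
  imports "HOL-Algebra.Algebra"
begin

text \<open>Words in the free group F(S): lists of letters (x, b), where b = True means x^1
  and b = False means x^(-1).\<close>

type_synonym 'x word = "('x \<times> bool) list"

definition word_over :: "'x set \<Rightarrow> 'x word \<Rightarrow> bool" where
  "word_over S w \<longleftrightarrow> fst ` set w \<subseteq> S"

definition inv_word :: "'x word \<Rightarrow> 'x word" where
  "inv_word w = rev (map (\<lambda>(x, b). (x, \<not> b)) w)"

inductive cancel_step :: "'x word \<Rightarrow> 'x word \<Rightarrow> bool" where
  "cancel_step (u @ [(x, b), (x, \<not> b)] @ v) (u @ v)"

definition free_equiv :: "'x word \<Rightarrow> 'x word \<Rightarrow> bool" where
  "free_equiv = equivclp cancel_step"

definition free_length :: "'x word \<Rightarrow> nat" where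
  "free_length w = (LEAST n. \<exists>w'. free_equiv w w' \<and> length w' = n)"

text \<open>Length of the relation u = v: length of u v^(-1) in F(S).\<close>
definition rel_length :: "'x word \<times> 'x word \<Rightarrow> nat" where
  "rel_length r = free_length (fst r @ inv_word (snd r))"

inductive pres_step :: "('x word \<times> 'x word) set \<Rightarrow> 'x word \<Rightarrow> 'x word \<Rightarrow> bool"
  for R where
  cancel: "pres_step R (u @ [(x, b), (x, \<not> b)] @ v) (u @ v)"
| relator: "(r, s) \<in> R \<Longrightarrow> pres_step R (u @ r @ v) (u @ s @ v)"

definition pres_equiv :: "('x word \<times> 'x word) set \<Rightarrow> 'x word \<Rightarrow> 'x word \<Rightarrow> bool" where
  "pres_equiv R = equivclp (pres_step R)"

definition eval_word :: "('g, 'm) monoid_scheme \<Rightarrow> ('x \<Rightarrow> 'g) \<Rightarrow> 'x word \<Rightarrow> 'g" where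
  "eval_word G gen w =
     foldr (\<lambda>(x, b) acc. (if b then gen x else inv\<^bsub>G\<^esub> (gen x)) \<otimes>\<^bsub>G\<^esub> acc) w \<one>\<^bsub>G\<^esub>"

text \<open>G is given by the presentation \<langle>S | R\<rangle> via gen: the words over S evaluate onto G,
  and two words are equal in G iff they are equivalent modulo free cancellation and R.
  (I.e. the induced map F(S)/\<langle>\<langle>R\<rangle>\<rangle> \<rightarrow> G is an isomorphism.)\<close>
definition presents :: "('g, 'm) monoid_scheme \<Rightarrow> 'x set \<Rightarrow> ('x word \<times> 'x word) set
    \<Rightarrow> ('x \<Rightarrow> 'g) \<Rightarrow> bool" where
  "presents G S R gen \<longleftrightarrow>
     group G \<and> gen ` S \<subseteq> carrier G \<and>
     (\<forall>(u, v) \<in> R. word_over S u \<and> word_over S v) \<and>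
     carrier G = eval_word G gen ` {w. word_over S w} \<and>
     (\<forall>w1 w2. word_over S w1 \<longrightarrow> word_over S w2 \<longrightarrow>
        (eval_word G gen w1 = eval_word G gen w2 \<longleftrightarrow> pres_equiv R w1 w2))"

definition glength :: "('g, 'm) monoid_scheme \<Rightarrow> 'x set \<Rightarrow> ('x \<Rightarrow> 'g) \<Rightarrow> 'g \<Rightarrow> nat" where
  "glength G S gen g = (LEAST r. \<exists>w. word_over S w \<and> length w = r \<and> eval_word G gen w = g)"

definition par_sub :: "('g, 'm) monoid_scheme \<Rightarrow> ('x \<Rightarrow> 'g) \<Rightarrow> 'x set \<Rightarrow> 'g set" where
  "par_sub G gen I = generate G (gen ` I)"

definition min_reps :: "('g, 'm) monoid_scheme \<Rightarrow> 'x set \<Rightarrow> ('x \<Rightarrow> 'g) \<Rightarrow> 'x set \<Rightarrow> 'g set" where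
  "min_reps G S gen I = {w \<in> carrier G. \<forall>y \<in> I.
      glength G S gen (w \<otimes>\<^bsub>G\<^esub> gen y) > glength G S gen w}"

end

theory Submission
  imports Defs
begin

lemma equivclp_invar:
  assumes "\<And>x y. r x y \<Longrightarrow> f x = f y" and "equivclp r a b"
  shows "f a = f b"
proof -
  have "(symclp r)\<^sup>*\<^sup>* a b" using assms(2) by (simp add: equivclp_def)
  then show ?thesis
  proof (induction rule: rtranclp_induct)
    case base then show ?case by simp
  next
    case (step y z)
    then show ?case using assms(1) by (auto simp: symclp_def)
  qed
qed

lemma word_over_simps[simp]:
  "word_over S [] = True"
  "word_over S ((x,b) # w) = (x \<in> S \<and> word_over S w)"
  "word_over S (u @ v) = (word_over S u \<and> word_over S v)"
  by (auto simp: word_over_def)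

lemma free_len_par: "even (free_length w) = even (length w)"
proof -
  have ex: "\<exists>n w'. free_equiv w w' \<and> length w' = n"
    by (rule exI[of _ "length w"], rule exI[of _ w]) (simp add: free_equiv_def reflpD[OF reflp_equivclp])
  obtain w' where w': "free_equiv w w'" "length w' = free_length w"
    using LeastI_ex[OF ex] unfolding free_length_def by blast
  have inv: "\<And>x y. cancel_step x y \<Longrightarrow> even (length x) = even (length y)"
    by (auto elim!: cancel_step.cases)
  have "even (length w) = even (length w')"
    using equivclp_invar[where f="\<lambda>w. even (length w)", OF inv] w'(1) unfolding free_equiv_def
    by blast
  then show ?thesis using w'(2) by simp
qed

locale pctx = group G for G (structure) +
  fixes S R gen
  assumes pres: "presents G S R gen"
    and invol: "\<forall>x\<in>S. gen x \<otimes> gen x = \<one>"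
    and even_rel: "\<forall>r\<in>R. even (rel_length r)"
begin

abbreviation "ev \<equiv> eval_word G gen"
abbreviation "L \<equiv> glength G S gen"

lemma gen_in: "x \<in> S \<Longrightarrow> gen x \<in> carrier G"
  using pres by (auto simp: presents_def)

lemma inv_gen: "x \<in> S \<Longrightarrow> inv (gen x) = gen x"
  using invol gen_in inv_equality by blast

lemma ev_Nil[simp]: "ev [] = \<one>" by (simp add: eval_word_def)

lemma ev_Cons: "ev ((x,b) # w) = (if b then gen x else inv (gen x)) \<otimes> ev w"
  by (simp add: eval_word_def)

lemma ev_Cons_S: "x \<in> S \<Longrightarrow> ev ((x,b) # w) = gen x \<otimes> ev w"
  by (simp add: ev_Cons inv_gen)

lemma ev_carrier: "word_over S w \<Longrightarrow> ev w \<in> carrier G"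
  by (induction w) (auto simp: ev_Cons_S gen_in)

lemma ev_append: "word_over S u \<Longrightarrow> word_over S v \<Longrightarrow> ev (u @ v) = ev u \<otimes> ev v"
  by (induction u) (auto simp: ev_Cons_S gen_in ev_carrier m_assoc)

lemma pres_step_par: "pres_step R u v \<Longrightarrow> even (length u) = even (length v)"
proof (induction rule: pres_step.induct)
  case (cancel u x b v) then show ?case by simp
next
  case (relator r s u v)
  then have "even (rel_length (r, s))" using even_rel by blast
  then have "even (length r + length s)"
    by (simp add: rel_length_def free_len_par inv_word_def)
  then show ?case by auto
qed

lemma word_par:
  assumes "word_over S w1" "word_over S w2" "ev w1 = ev w2"
  shows "even (length w1) = even (length w2)"
proof -
  have "pres_equiv R w1 w2" using pres assms by (auto simp: presents_def)
  then show ?thesis using equivclp_invar[of "pres_step R" "\<lambda>w. even (length w)"] pres_step_par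
    by (auto simp: pres_equiv_def)
qed

lemma L_ex: assumes "g \<in> carrier G"
  shows "\<exists>w. word_over S w \<and> length w = L g \<and> ev w = g"
proof -
  have "\<exists>n w. word_over S w \<and> length w = n \<and> ev w = g"
    using assms pres by (auto simp: presents_def)
  from LeastI_ex[OF this] show ?thesis unfolding glength_def by blast
qed

lemma L_le: "word_over S w \<Longrightarrow> L (ev w) \<le> length w"
  unfolding glength_def by (rule Least_le) blast

lemma L_par: assumes "word_over S w" shows "even (L (ev w)) = even (length w)"
proof -
  obtain w' where "word_over S w'" "length w' = L (ev w)" "ev w' = ev w"
    using L_ex ev_carrier assms by blast
  then show ?thesis using word_par assms by metis
qed

lemma L_step:
  assumes g: "g \<in> carrier G" and y: "y \<in> S"
  shows "L (g \<otimes> gen y) \<noteq> L g"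
proof -
  obtain w where w: "word_over S w" "length w = L g" "ev w = g" using L_ex g by blast
  have "ev (w @ [(y,True)]) = g \<otimes> gen y"
    using w y by (simp add: ev_append ev_Cons_S gen_in)
  moreover have "even (L (ev (w @ [(y,True)]))) = even (length (w @ [(y,True)]))"
    using L_par w y by simp
  ultimately show ?thesis using w by auto
qed

lemma L_one: "L \<one> = 0"
  using L_le[of "[]"] by simp

lemma L_pos: assumes "y \<in> S" shows "L (gen y) > 0"
  using L_step[OF one_closed assms] gen_in assms L_one by simp

lemma L_drop:
  assumes g: "g \<in> carrier G" "g \<noteq> \<one>"
  shows "\<exists>y\<in>S. L (g \<otimes> gen y) < L g"
proof -
  obtain w where w: "word_over S w" "length w = L g" "ev w = g" using L_ex g by blast
  then have "w \<noteq> []" using g by auto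
  then obtain p y b where p: "w = p @ [(y,b)]" by (metis rev_exhaust surj_pair)
  have y: "y \<in> S" "word_over S p" using w p by auto
  have "g = ev p \<otimes> gen y" using w p y by (simp add: ev_append ev_Cons_S gen_in)
  then have "g \<otimes> gen y = ev p"
    using y invol by (simp add: m_assoc ev_carrier gen_in)
  then have "L (g \<otimes> gen y) \<le> length p" using L_le y by simp
  then show ?thesis using p w y by (intro bexI[of _ y]) auto
qed

lemma par_all: "par_sub G gen S = carrier G"
proof
  show "par_sub G gen S \<subseteq> carrier G"
    unfolding par_sub_def by (rule generate_incl) (auto simp: gen_in)
next
  have "word_over S w \<Longrightarrow> ev w \<in> generate G (gen ` S)" for w
  proof (induction w)
    case Nil then show ?case by (simp add: generate.one)
  next
    case (Cons a w)
    obtain x b where a: "a = (x, b)" by fastforce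
    then have "x \<in> S" "word_over S w" using Cons.prems by auto
    then show ?case using Cons.IH a by (simp add: ev_Cons_S generate.eng generate.incl)
  qed
  then show "carrier G \<subseteq> par_sub G gen S"
    using pres unfolding par_sub_def presents_def by auto
qed

lemma par_single: assumes x: "x \<in> S" shows "par_sub G gen {x} = {\<one>, gen x}"
proof
  show "par_sub G gen {x} \<subseteq> {\<one>, gen x}"
  proof
    fix h assume "h \<in> par_sub G gen {x}"
    then have "h \<in> generate G {gen x}" by (simp add: par_sub_def)
    then show "h \<in> {\<one>, gen x}"
      by (induction rule: generate.induct)
         (use x invol gen_in inv_gen in auto)
  qed
next
  show "{\<one>, gen x} \<subseteq> par_sub G gen {x}"
    by (auto simp: par_sub_def intro: generate.intros)
qed

lemma main:
  assumes I: "I = S \<or> (\<exists>x \<in> S. I = {x})"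
  shows "(\<forall>w \<in> carrier G. \<exists>!a. a \<in> (w <# par_sub G gen I) \<inter> min_reps G S gen I)
       \<and> (\<forall>a a' b b'. a \<in> min_reps G S gen I \<longrightarrow> a' \<in> min_reps G S gen I \<longrightarrow>
            b \<in> par_sub G gen I \<longrightarrow> b' \<in> par_sub G gen I \<longrightarrow>
            a \<otimes> b = a' \<otimes> b' \<longrightarrow> a = a' \<and> b = b')"
proof -
  from I show ?thesis
  proof
    assume IS: "I = S"
    have mr: "min_reps G S gen I = {\<one>}"
    proof
      show "min_reps G S gen I \<subseteq> {\<one>}"
      proof
        fix a assume a: "a \<in> min_reps G S gen I"
        then have ac: "a \<in> carrier G" and h: "\<forall>y\<in>S. L (a \<otimes> gen y) > L a"
          unfolding min_reps_def IS by auto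
        show "a \<in> {\<one>}"
        proof (rule ccontr)
          assume "a \<notin> {\<one>}"
          then obtain y where "y \<in> S" "L (a \<otimes> gen y) < L a" using L_drop[OF ac] by auto
          then show False using h by fastforce
        qed
      qed
      show "{\<one>} \<subseteq> min_reps G S gen I"
        using L_pos L_one gen_in unfolding min_reps_def IS by simp
    qed
    have co: "\<one> \<in> w <# carrier G" if "w \<in> carrier G" for w
    proof -
      have "w \<otimes> inv w = \<one>" using that by simp
      then show ?thesis unfolding l_coset_def using that by blast
    qed
    have p1: "\<exists>!a. a \<in> (w <# par_sub G gen I) \<inter> min_reps G S gen I" if "w \<in> carrier G" for w
    proof -
      have pI: "par_sub G gen I = carrier G" using IS par_all by simp
      show ?thesis unfolding mr pI using co[OF that] by blast
    qed
    have p2: "a = a' \<and> b = b'" if "a \<in> min_reps G S gen I" "a' \<in> min_reps G S gen I"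
      "b \<in> par_sub G gen I" "b' \<in> par_sub G gen I" "a \<otimes> b = a' \<otimes> b'" for a a' b b'
    proof -
      have "a = \<one>" "a' = \<one>" using that(1,2) mr by auto
      moreover have "b \<in> carrier G" "b' \<in> carrier G" using that(3,4) par_all IS by auto
      ultimately show ?thesis using that(5) by simp
    qed
    show ?thesis using p1 p2 by blast
  next
    assume "\<exists>x\<in>S. I = {x}"
    then obtain x where x: "x \<in> S" and Ix: "I = {x}" by blast
    define s where "s = gen x"
    have s: "s \<in> carrier G" "s \<otimes> s = \<one>" "\<And>g. g \<in> carrier G \<Longrightarrow> L (g \<otimes> s) \<noteq> L g"
      using x invol gen_in L_step by (auto simp: s_def)
    have ss: "g \<otimes> s \<otimes> s = g" if "g \<in> carrier G" for g
      using that s by (simp add: m_assoc)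
    have mr: "min_reps G S gen I = {a \<in> carrier G. L (a \<otimes> s) > L a}"
      unfolding min_reps_def Ix s_def by auto
    have ps: "par_sub G gen I = {\<one>, s}" using par_single x Ix s_def by simp
    have co: "w <# {\<one>, s} = {w, w \<otimes> s}" if "w \<in> carrier G" for w
      using that by (auto simp: l_coset_def)
    have part1: "\<exists>!a. a \<in> (w <# par_sub G gen I) \<inter> min_reps G S gen I"
      if w: "w \<in> carrier G" for w
    proof (cases "L (w \<otimes> s) > L w")
      case True
      have "L (w \<otimes> s \<otimes> s) < L (w \<otimes> s)" using ss w True by simp
      then show ?thesis unfolding ps co[OF w] mr using True w s
        by (auto intro!: ex1I[of _ w])
    next
      case False
      then have F: "L (w \<otimes> s) < L w" using s(3)[OF w] by simp
      then have "L (w \<otimes> s \<otimes> s) > L (w \<otimes> s)" using ss w by simp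
      then show ?thesis unfolding ps co[OF w] mr using F w s
        by (auto intro!: ex1I[of _ "w \<otimes> s"])
    qed
    have part2: "a = a' \<and> b = b'"
      if a: "a \<in> min_reps G S gen I" and a': "a' \<in> min_reps G S gen I"
        and b: "b \<in> par_sub G gen I" and b': "b' \<in> par_sub G gen I"
        and e: "a \<otimes> b = a' \<otimes> b'" for a a' b b'
    proof -
      have ac: "a \<in> carrier G" "a' \<in> carrier G" "L (a \<otimes> s) > L a" "L (a' \<otimes> s) > L a'"
        using a a' mr by auto
      have bb: "b \<in> {\<one>, s}" "b' \<in> {\<one>, s}" using b b' ps by auto
      show ?thesis
      proof (cases "b = b'")
        case True
        then show ?thesis using e ac bb s by (auto simp: r_cancel)
      next
        case False
        then have "(b = \<one> \<and> b' = s) \<or> (b = s \<and> b' = \<one>)" using bb by auto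
        then show ?thesis
        proof
          assume h: "b = \<one> \<and> b' = s"
          then have "a = a' \<otimes> s" using e ac s by simp
          then show ?thesis using ac ss by auto
        next
          assume h: "b = s \<and> b' = \<one>"
          then have "a' = a \<otimes> s" using e ac s by simp
          then show ?thesis using ac ss by auto
        qed
      qed
    qed
    show ?thesis using part1 part2 by blast
  qed
qed


end


theorem lemma3p10:
  fixes G :: "('g, 'm) monoid_scheme" and S :: "'x set"
    and R :: "('x word \<times> 'x word) set" and gen :: "'x \<Rightarrow> 'g" and I :: "'x set"
  assumes pres: "presents G S R gen"
    and invol: "\<forall>x \<in> S. gen x \<otimes>\<^bsub>G\<^esub> gen x = \<one>\<^bsub>G\<^esub>"
    and even_rel: "\<forall>r \<in> R. even (rel_length r)"
    and I: "I = S \<or> (\<exists>x \<in> S. I = {x})"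
  shows "(\<forall>w \<in> carrier G. \<exists>!a. a \<in> (w <#\<^bsub>G\<^esub> par_sub G gen I) \<inter> min_reps G S gen I)
       \<and> (\<forall>a a' b b'. a \<in> min_reps G S gen I \<longrightarrow> a' \<in> min_reps G S gen I \<longrightarrow>
            b \<in> par_sub G gen I \<longrightarrow> b' \<in> par_sub G gen I \<longrightarrow>
            a \<otimes>\<^bsub>G\<^esub> b = a' \<otimes>\<^bsub>G\<^esub> b' \<longrightarrow> a = a' \<and> b = b')"
proof -
  have grp: "group G" using pres by (simp add: presents_def)
  have "pctx G S R gen"
    by (rule pctx.intro[OF grp], unfold pctx_axioms_def, use pres invol even_rel in blast)
  then interpret pctx G S R gen .
  show ?thesis using main[OF I] .
qed

end
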